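(* Let $r_{\mathrm{free}}$ be the number of generators of the torsion-free part of the $\mathbb{Z}_2[[q]]$-module $H^*(C_{\mathrm{borel}},d_{\mathrm{borel}})$ and $r_{\mathrm{tor}}$ the number of generators of its torsion part. Then $$r_{\mathrm{free}}+2r_{\mathrm{tor}}=\dim_{\mathbb{Z}_2}H^*(C,d).$$
   Context: $M$ is a closed smooth manifold with an involution $\iota$, $f$ an $\iota$-invariant Morse function with $\iota$-invariant metric such that the gradient flows of $f$ and $f|M^{\mathrm{inv}}$ are Morse–Smale and there is a constant $i_{\mathrm{anti}}$ with $i_M(x)=i_{M^{\mathrm{inv}}}(x)+i_{\mathrm{anti}}$ for every $\iota$-invariant critical point $x$ ($M^{\mathrm{inv}}$ the fixed set, $i$ Morse indices). $(C,d)$ is the $\mathbb{Z}_2$ Morse cochain complex of $f$, $\iota_{\mathrm{morse}}:C\to C$ the chain map sending a critical point $x$ to $\iota(x)$. $C_{\mathrm{borel}}=C[[q]]=C\otimes\mathbb{Z}_2[[q]]$ with $q$ of degree $1$, and $d_{\mathrm{borel}}=d+(\iota_{\mathrm{morse}}-\mathrm{id})q$, extended $\mathbb{Z}_2[[q]]$-linearly. *)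

theory Defs
  imports "HOL-Library.Z2" "HOL-Computational_Algebra.Formal_Power_Series"
begin

text \<open>Cochains with coefficients in a commutative ring R on a finite set of critical
  points (a finite type 'c) are functions 'c => R; a critical point x is the indicator
  function of x.  A differential is given by its coefficient matrix A, where A x y is the
  coefficient of y in d x.\<close>

definition mat_apply :: "('c::finite \<Rightarrow> 'c \<Rightarrow> 'r::comm_ring_1) \<Rightarrow> ('c \<Rightarrow> 'r) \<Rightarrow> ('c \<Rightarrow> 'r)" where
  "mat_apply A v = (\<lambda>y. \<Sum>x\<in>UNIV. A x y * v x)"

definition rspan :: "('c \<Rightarrow> 'r::comm_ring_1) set \<Rightarrow> ('c \<Rightarrow> 'r) set" where
  "rspan G = {(\<lambda>x. \<Sum>g\<in>F. c g * g x) | F c. finite F \<and> F \<subseteq> G}"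

text \<open>Minimal number of generators of the R-module M/N (for submodules N of M).\<close>
definition min_gens :: "('c \<Rightarrow> 'r::comm_ring_1) set \<Rightarrow> ('c \<Rightarrow> 'r) set \<Rightarrow> nat" where
  "min_gens M N = (LEAST n. \<exists>G. finite G \<and> card G = n \<and> G \<subseteq> M \<and>
       M \<subseteq> {(\<lambda>x. u x + w x) | u w. u \<in> rspan G \<and> w \<in> N})"

definition morse_d :: "('c::finite \<Rightarrow> 'c \<Rightarrow> bit) \<Rightarrow> ('c \<Rightarrow> bit) \<Rightarrow> ('c \<Rightarrow> bit)" where
  "morse_d A = mat_apply A"

text \<open>iota_morse sends the critical point x to iota x; on coefficient functions this is
  v |-> v o iota (iota being an involution).\<close>
definition iota_morse :: "('c \<Rightarrow> 'c) \<Rightarrow> ('c \<Rightarrow> 'r) \<Rightarrow> ('c \<Rightarrow> 'r)" where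
  "iota_morse \<iota> v = v \<circ> \<iota>"

definition borel_d :: "('c::finite \<Rightarrow> 'c \<Rightarrow> bit) \<Rightarrow> ('c \<Rightarrow> 'c) \<Rightarrow> ('c \<Rightarrow> bit fps) \<Rightarrow> ('c \<Rightarrow> bit fps)" where
  "borel_d A \<iota> v = (\<lambda>y. mat_apply (\<lambda>x z. fps_const (A x z)) v y
                       + (iota_morse \<iota> v y - v y) * fps_X)"

definition borel_cocycles where "borel_cocycles A \<iota> = {v. borel_d A \<iota> v = (\<lambda>_. 0)}"
definition borel_coboundaries where "borel_coboundaries A \<iota> = range (borel_d A \<iota>)"

text \<open>Torsion part of H^*(C_borel, d_borel), as a set of representing cocycles.\<close>
definition borel_torsion where
  "borel_torsion A \<iota> = {v \<in> borel_cocycles A \<iota>.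
      \<exists>a::bit fps. a \<noteq> 0 \<and> (\<lambda>x. a * v x) \<in> borel_coboundaries A \<iota>}"

definition r_free where
  "r_free A \<iota> = min_gens (borel_cocycles A \<iota>) (borel_torsion A \<iota>)"
definition r_tor where
  "r_tor A \<iota> = min_gens (borel_torsion A \<iota>) (borel_coboundaries A \<iota>)"

text \<open>dim over Z_2 of H^*(C,d) (minimal spanning set = dimension).\<close>
definition dim_morse_cohomology where
  "dim_morse_cohomology A = min_gens {v. morse_d A v = (\<lambda>_. 0)} (range (morse_d A))"

end

theory Submission
  imports Defs "HOL-Library.FuncSet"
begin

unbundle fps_syntax


definition mmul :: "('c::finite \<Rightarrow> 'c \<Rightarrow> 'r::comm_ring_1) \<Rightarrow> ('c \<Rightarrow> 'c \<Rightarrow> 'r) \<Rightarrow> ('c \<Rightarrow> 'c \<Rightarrow> 'r)" where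
  "mmul X Y = (\<lambda>x z. \<Sum>y\<in>UNIV. X x y * Y y z)"

definition idm :: "'c \<Rightarrow> 'c \<Rightarrow> 'r::comm_ring_1" where
  "idm = (\<lambda>x y. if x = y then 1 else 0)"

lemma mmul_assoc: "mmul (mmul X Y) Z = mmul X (mmul Y Z)"
  unfolding mmul_def
  by (auto simp: sum_distrib_left sum_distrib_right mult.assoc intro!: ext sum.swap)

lemma mmul_idm_left[simp]: "mmul idm X = X"
  unfolding mmul_def idm_def by (auto intro!: ext simp: if_distrib[where f="\<lambda>a. a * _"] sum.delta sum.delta' cong: if_cong)

lemma mmul_idm_right[simp]: "mmul X idm = X"
  unfolding mmul_def idm_def by (auto intro!: ext simp: if_distrib[where f="\<lambda>a. _ * a"] sum.delta sum.delta' cong: if_cong)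

lemma mat_apply_mmul: "mat_apply Y (mat_apply X w) = mat_apply (mmul X Y) w"
  unfolding mat_apply_def mmul_def
  by (auto simp: sum_distrib_left sum_distrib_right mult.assoc mult.left_commute intro!: ext sum.swap)

lemma mat_apply_idm[simp]: "mat_apply idm w = w"
  unfolding mat_apply_def idm_def by (auto intro!: ext simp: if_distrib[where f="\<lambda>a. a * _"] sum.delta sum.delta' cong: if_cong)

definition gens where
  "gens M N G \<longleftrightarrow> finite G \<and> G \<subseteq> M \<and> M \<subseteq> {(\<lambda>x. u x + w x) | u w. u \<in> rspan G \<and> w \<in> N}"

definition is_mg where
  "is_mg M N m \<longleftrightarrow> (\<exists>G. gens M N G \<and> card G = m) \<and> (\<forall>G. gens M N G \<longrightarrow> m \<le> card G)"

lemma is_mg_min_gens: assumes "is_mg M N m" shows "min_gens M N = m"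
proof -
  from assms obtain G where G: "gens M N G" "card G = m" unfolding is_mg_def by blast
  show ?thesis unfolding min_gens_def
  proof (rule Least_equality)
    show "\<exists>G. finite G \<and> card G = m \<and> G \<subseteq> M \<and> M \<subseteq> {(\<lambda>x. u x + w x) | u w. u \<in> rspan G \<and> w \<in> N}"
      using G unfolding gens_def by blast
  next
    fix n assume "\<exists>G. finite G \<and> card G = n \<and> G \<subseteq> M \<and> M \<subseteq> {(\<lambda>x. u x + w x) | u w. u \<in> rspan G \<and> w \<in> N}"
    then obtain G' where "gens M N G'" "card G' = n" unfolding gens_def by blast
    then show "m \<le> n" using assms unfolding is_mg_def by blast
  qed
qed

lemma mat_apply_lin_sum:
  "mat_apply P (\<lambda>x. \<Sum>g\<in>F. c g * g x) = (\<lambda>y. \<Sum>g\<in>F. c g * mat_apply P g y)"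
  unfolding mat_apply_def
  by (auto intro!: ext simp: sum_distrib_left mult.left_commute intro: sum.swap)

lemma mat_apply_add:
  "mat_apply P (\<lambda>x. u x + w x) = (\<lambda>y. mat_apply P u y + mat_apply P w y)"
  unfolding mat_apply_def by (auto intro!: ext simp: distrib_left sum.distrib)

lemma mat_apply_scale:
  "mat_apply P (\<lambda>x. a * u x) = (\<lambda>y. a * mat_apply P u y)"
  unfolding mat_apply_def by (auto intro!: ext simp: sum_distrib_left mult.left_commute)

lemma rspan_image:
  assumes inj: "inj L" and lin: "\<And>F c. L (\<lambda>x. \<Sum>g\<in>F. c g * g x) = (\<lambda>y. \<Sum>g\<in>F. c g * L g y)"
    and u: "u \<in> rspan G"
  shows "L u \<in> rspan (L ` G)"
proof -
  from u obtain F c where F: "finite F" "F \<subseteq> G" and ud: "u = (\<lambda>x. \<Sum>g\<in>F. c g * g x)"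
    unfolding rspan_def by blast
  have "L u = (\<lambda>y. \<Sum>g\<in>F. c g * L g y)" using lin ud by simp
  also have "\<dots> = (\<lambda>y. \<Sum>g'\<in>L ` F. c (inv L g') * g' y)"
  proof
    fix y
    have "inj_on L F" using inj by (simp add: inj_on_def inj_def)
    then show "(\<Sum>g\<in>F. c g * L g y) = (\<Sum>g'\<in>L ` F. c (inv L g') * g' y)"
      by (simp add: sum.reindex inv_f_f[OF inj])
  qed
  finally have "L u = (\<lambda>y. \<Sum>g'\<in>L ` F. (\<lambda>g'. c (inv L g')) g' * g' y)" .
  moreover have "finite (L ` F)" "L ` F \<subseteq> L ` G" using F by auto
  ultimately show ?thesis unfolding rspan_def
    by (intro CollectI exI[of _ "L ` F"] exI[of _ "\<lambda>g'. c (inv L g')"]) simp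
qed

lemma gens_image:
  assumes inj: "inj L" and lin: "\<And>F c. L (\<lambda>x. \<Sum>g\<in>F. c g * g x) = (\<lambda>y. \<Sum>g\<in>F. c g * L g y)"
    and add: "\<And>u w. L (\<lambda>x. u x + w x) = (\<lambda>y. L u y + L w y)"
    and G: "gens M N G"
  shows "gens (L ` M) (L ` N) (L ` G)"
  unfolding gens_def
proof (intro conjI)
  show "finite (L ` G)" using G unfolding gens_def by simp
  show "L ` G \<subseteq> L ` M" using G unfolding gens_def by blast
  show "L ` M \<subseteq> {(\<lambda>x. u x + w x) | u w. u \<in> rspan (L ` G) \<and> w \<in> L ` N}"
  proof
    fix v assume "v \<in> L ` M"
    then obtain m where m: "m \<in> M" "v = L m" by blast
    then obtain u w where uw: "u \<in> rspan G" "w \<in> N" "m = (\<lambda>x. u x + w x)"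
      using G unfolding gens_def by blast
    have "v = (\<lambda>y. L u y + L w y)" using m uw add by simp
    moreover have "L u \<in> rspan (L ` G)" using rspan_image[OF inj lin uw(1)] .
    ultimately show "v \<in> {(\<lambda>x. u x + w x) | u w. u \<in> rspan (L ` G) \<and> w \<in> L ` N}"
      using uw(2) by blast
  qed
qed

lemma is_mg_image:
  fixes P Q :: "'c::finite \<Rightarrow> 'c \<Rightarrow> 'r::comm_ring_1"
  assumes QP: "\<And>w. mat_apply Q (mat_apply P w) = w" and PQ: "\<And>w. mat_apply P (mat_apply Q w) = w"
    and mg: "is_mg M N m"
  shows "is_mg (mat_apply P ` M) (mat_apply P ` N) m"
proof -
  have injP: "inj (mat_apply P)" by (metis QP injI)
  have injQ: "inj (mat_apply Q)" by (metis PQ injI)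
  from mg obtain G where G: "gens M N G" "card G = m" unfolding is_mg_def by blast
  have "gens (mat_apply P ` M) (mat_apply P ` N) (mat_apply P ` G)"
    by (rule gens_image[OF injP mat_apply_lin_sum mat_apply_add G(1)])
  moreover have "card (mat_apply P ` G) = m" using G injP by (simp add: card_image inj_on_subset)
  moreover have "m \<le> card G'" if G': "gens (mat_apply P ` M) (mat_apply P ` N) G'" for G'
  proof -
    have g: "gens (mat_apply Q ` mat_apply P ` M) (mat_apply Q ` mat_apply P ` N) (mat_apply Q ` G')"
      by (rule gens_image[OF injQ mat_apply_lin_sum mat_apply_add G'])
    have e: "mat_apply Q ` mat_apply P ` S = S" for S by (force simp: image_image QP)
    have "m \<le> card (mat_apply Q ` G')" using mg g unfolding e is_mg_def by blast
    also have "\<dots> \<le> card G'" using G' unfolding gens_def by (simp add: card_image_le)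
    finally show ?thesis .
  qed
  ultimately show ?thesis unfolding is_mg_def by blast
qed




lemma bit_add_self[simp]: "(a::bit) + a = 0"
  by (cases a) simp_all

lemma bfps_add_self[simp]: "(a::bit fps) + a = 0"
  by (rule fps_ext) (simp only: fps_add_nth bit_add_self fps_zero_nth)

lemma bfps_minus: "(a::bit fps) - b = a + b"
  by (rule fps_ext) simp

lemma fps_const_sum': "fps_const (\<Sum>x\<in>S. f x) = (\<Sum>x\<in>S. fps_const (f x))"
  by (induction S rule: infinite_finite_induct) (auto simp flip: fps_const_add)

lemma sum_ob1: "(\<Sum>x\<in>UNIV. of_bool (x = a) * (v x :: 'r::comm_semiring_1)) = v (a::'c::finite)"
  by (simp add: of_bool_def if_distrib[where f="\<lambda>b. b * _"] cong: if_cong)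

definition Dm :: "('c::finite \<Rightarrow> 'c \<Rightarrow> bit) \<Rightarrow> ('c \<Rightarrow> 'c) \<Rightarrow> 'c \<Rightarrow> 'c \<Rightarrow> bit fps" where
  "Dm A \<iota> = (\<lambda>x y. fps_const (A x y) + fps_X * (of_bool (x = \<iota> y) + of_bool (x = y)))"

lemma borel_d_Dm: "borel_d A \<iota> = mat_apply (Dm A \<iota>)"
proof (intro ext)
  fix v y
  have "mat_apply (Dm A \<iota>) v y = (\<Sum>x\<in>UNIV. fps_const (A x y) * v x)
     + fps_X * ((\<Sum>x\<in>UNIV. of_bool (x = \<iota> y) * v x) + (\<Sum>x\<in>UNIV. of_bool (x = y) * v x))"
  proof -
    have pw: "Dm A \<iota> x y * v x = fps_const (A x y) * v x + fps_X * (of_bool (x = \<iota> y) * v x + of_bool (x = y) * v x)" for x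
      unfolding Dm_def by (simp add: algebra_simps)
    show ?thesis unfolding mat_apply_def pw by (simp only: sum.distrib sum_distrib_left distrib_left)
  qed
  also have "\<dots> = (\<Sum>x\<in>UNIV. fps_const (A x y) * v x) + fps_X * (v (\<iota> y) + v y)"
    by (simp only: sum_ob1)
  finally show "borel_d A \<iota> v y = mat_apply (Dm A \<iota>) v y"
    unfolding borel_d_def iota_morse_def mat_apply_def by (simp add: bfps_minus mult.commute)
qed

lemma Dm_nth0[simp]: "Dm A \<iota> x y $ 0 = A x y"
  unfolding Dm_def by simp

lemma sum_expand4:
  fixes a b c d :: "'c \<Rightarrow> bit fps"
  shows "(\<Sum>y\<in>S. (a y + fps_X * b y) * (c y + fps_X * d y)) =
   (\<Sum>y\<in>S. a y * c y) + fps_X * ((\<Sum>y\<in>S. a y * d y) + (\<Sum>y\<in>S. b y * c y)) + fps_X * fps_X * (\<Sum>y\<in>S. b y * d y)"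
proof -
  have pw: "(a y + fps_X * b y) * (c y + fps_X * d y) = a y * c y + fps_X * (a y * d y + b y * c y) + fps_X * fps_X * (b y * d y)" for y
    by (simp add: algebra_simps)
  show ?thesis unfolding pw by (simp only: sum.distrib sum_distrib_left distrib_left)
qed




lemma sum_ob2: "(\<Sum>x\<in>UNIV. (v x :: 'r::comm_semiring_1) * of_bool (x = a)) = v (a::'c::finite)"
  by (simp add: of_bool_def if_distrib[where f="\<lambda>b. _ * b"] cong: if_cong)

lemma sum_ob1': "(\<Sum>x\<in>UNIV. of_bool (a = x) * (v x :: 'r::comm_semiring_1)) = v (a::'c::finite)"
  by (simp add: of_bool_def if_distrib[where f="\<lambda>b. b * _"] cong: if_cong)

lemma inj_invol_aux: assumes "\<And>x. \<iota> (\<iota> x) = x" shows "inj \<iota>"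
  by (metis assms injI)

lemma Dm_sq:
  assumes invol: "\<And>x. \<iota> (\<iota> x) = x"
    and dd: "\<And>x z. (\<Sum>y\<in>UNIV. A x y * A y z) = 0"
    and equiv: "\<And>x y. A (\<iota> x) (\<iota> y) = A x y"
  shows "mmul (Dm A \<iota>) (Dm A \<iota>) = (\<lambda>_ _. 0)"
proof (intro ext)
  fix x z
  have inj_invol: "inj \<iota>" by (rule inj_invol_aux[OF invol])
  have eq2: "A (\<iota> x) z = A x (\<iota> z)" by (metis equiv invol)
  have s1: "(\<Sum>y\<in>UNIV. fps_const (A x y) * fps_const (A y z)) = 0"
  proof -
    have "(\<Sum>y\<in>UNIV. fps_const (A x y) * fps_const (A y z)) = fps_const (\<Sum>y\<in>UNIV. A x y * A y z)"
      by (simp only: fps_const_mult fps_const_sum')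
    then show ?thesis using dd[of x z] by simp
  qed
  have s2: "(\<Sum>y\<in>UNIV. fps_const (A x y) * (of_bool (y = \<iota> z) + of_bool (y = z))) =
      fps_const (A x (\<iota> z)) + fps_const (A x z)"
    by (simp only: distrib_left sum.distrib sum_ob2)
  have iff: "(x = \<iota> y) = (y = \<iota> x)" for y using invol by metis
  have iff': "(x = y) = (y = x)" for y by blast
  have s3: "(\<Sum>y\<in>UNIV. (of_bool (x = \<iota> y) + of_bool (x = y)) * fps_const (A y z)) =
      fps_const (A (\<iota> x) z) + fps_const (A x z)"
    by (simp only: iff distrib_right sum.distrib sum_ob1 sum_ob1')
  have iff2: "(\<iota> x = z) = (x = \<iota> z)" using invol by metis
  have s4: "(\<Sum>y\<in>UNIV. (of_bool (x = \<iota> y) + of_bool (x = y)) * (of_bool (y = \<iota> z) + of_bool (y = z)) :: bit fps) = 0"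
  proof -
    have "(\<Sum>y\<in>UNIV. (of_bool (x = \<iota> y) + of_bool (x = y)) * (of_bool (y = \<iota> z) + of_bool (y = z)) :: bit fps)
       = (of_bool (\<iota> x = \<iota> z) + of_bool (\<iota> x = z)) + (of_bool (x = \<iota> z) + of_bool (x = z))"
      by (simp only: iff distrib_right sum.distrib sum_ob1 sum_ob1')
    also have "\<dots> = (of_bool (x = z) + of_bool (x = \<iota> z)) + (of_bool (x = \<iota> z) + of_bool (x = z))"
      by (simp only: iff2 inj_eq[OF inj_invol])
    also have "\<dots> = 0" by (simp only: add.commute[of "of_bool (x = \<iota> z)"] bfps_add_self)
    finally show ?thesis .
  qed
  have "mmul (Dm A \<iota>) (Dm A \<iota>) x z = (\<Sum>y\<in>UNIV. (fps_const (A x y) + fps_X * (of_bool (x = \<iota> y) + of_bool (x = y))) *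
       (fps_const (A y z) + fps_X * (of_bool (y = \<iota> z) + of_bool (y = z))))"
    unfolding mmul_def Dm_def ..
  also have "\<dots> = 0" unfolding sum_expand4 s1 s2 s3 s4 eq2
    by (simp only: bfps_add_self add_0_left add_0_right mult_zero_right)
  finally show "mmul (Dm A \<iota>) (Dm A \<iota>) x z = 0" .
qed




definition Zs :: "('c::finite \<Rightarrow> 'c \<Rightarrow> 'r::comm_ring_1) \<Rightarrow> ('c \<Rightarrow> 'r) set" where
  "Zs D = {v. mat_apply D v = (\<lambda>_. 0)}"
definition Bs :: "('c::finite \<Rightarrow> 'c \<Rightarrow> 'r::comm_ring_1) \<Rightarrow> ('c \<Rightarrow> 'r) set" where
  "Bs D = range (mat_apply D)"
definition Ts :: "('c::finite \<Rightarrow> 'c \<Rightarrow> 'r::comm_ring_1) \<Rightarrow> ('c \<Rightarrow> 'r) set" where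
  "Ts D = {v \<in> Zs D. \<exists>a. a \<noteq> 0 \<and> (\<lambda>x. a * v x) \<in> Bs D}"

lemma mat_apply_zero[simp]: "mat_apply P (\<lambda>_. 0) = (\<lambda>_. 0)"
  unfolding mat_apply_def by simp

lemma image_char:
  assumes "\<And>v. L (K v) = v" and "\<And>w. L w \<in> S1 \<longleftrightarrow> w \<in> S2"
  shows "S1 = L ` S2"
proof (intro set_eqI iffI)
  fix v assume "v \<in> S1"
  then have "K v \<in> S2" using assms(2)[of "K v"] assms(1) by simp
  then show "v \<in> L ` S2" using assms(1)[of v] by (metis imageI)
next
  fix v assume "v \<in> L ` S2"
  then show "v \<in> S1" using assms(2) by blast
qed

lemma conj_sets:
  fixes P Q D1 D2 :: "'c::finite \<Rightarrow> 'c \<Rightarrow> 'r::comm_ring_1"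
  assumes PQ: "mmul P Q = idm" and QP: "mmul Q P = idm" and comm: "mmul P D1 = mmul D2 P"
  shows "Zs D1 = mat_apply P ` Zs D2" "Bs D1 = mat_apply P ` Bs D2" "Ts D1 = mat_apply P ` Ts D2"
proof -
  let ?L = "mat_apply P" and ?K = "mat_apply Q"
  have KL: "?K (?L w) = w" for w by (simp add: mat_apply_mmul PQ)
  have LK: "?L (?K w) = w" for w by (simp add: mat_apply_mmul QP)
  have injL: "?L u = ?L w \<longleftrightarrow> u = w" for u w by (metis KL)
  have cm: "mat_apply D1 (?L w) = ?L (mat_apply D2 w)" for w
    by (simp add: mat_apply_mmul comm)
  have z: "?L w \<in> Zs D1 \<longleftrightarrow> w \<in> Zs D2" for w
    unfolding Zs_def using cm injL[of _ "\<lambda>_. 0"] by simp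
  have b: "?L w \<in> Bs D1 \<longleftrightarrow> w \<in> Bs D2" for w
  proof
    assume "?L w \<in> Bs D1"
    then obtain u where "mat_apply D1 u = ?L w" unfolding Bs_def by auto
    then have "?L (mat_apply D2 (?K u)) = ?L w" using cm[of "?K u"] LK by simp
    then have "w = mat_apply D2 (?K u)" by (simp only: injL)
    then show "w \<in> Bs D2" unfolding Bs_def by (metis rangeI)
  next
    assume "w \<in> Bs D2"
    then obtain u where "mat_apply D2 u = w" unfolding Bs_def by auto
    then show "?L w \<in> Bs D1" unfolding Bs_def using cm[of u] by (metis rangeI)
  qed
  have t: "?L w \<in> Ts D1 \<longleftrightarrow> w \<in> Ts D2" for w
  proof -
    have "(\<lambda>x. a * ?L w x) = ?L (\<lambda>x. a * w x)" for a by (simp add: mat_apply_scale)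
    then show ?thesis unfolding Ts_def using z b by simp
  qed
  show "Zs D1 = ?L ` Zs D2" by (rule image_char[OF LK z])
  show "Bs D1 = ?L ` Bs D2" by (rule image_char[OF LK b])
  show "Ts D1 = ?L ` Ts D2" by (rule image_char[OF LK t])
qed




lemma UNIV_bit: "(UNIV :: bit set) = {0, 1}"
  by (auto intro: bit_not_zero_iff[THEN iffD1])

instance bit :: finite
  by standard (simp add: UNIV_bit)

lemma card_UNIV_bit: "card (UNIV :: bit set) = 2"
  by (simp add: UNIV_bit)

lemma card_supp:
  "card {f :: 'c::finite \<Rightarrow> bit. \<forall>x. x \<notin> X \<longrightarrow> f x = 0} = 2 ^ card X"
proof -
  let ?E = "\<lambda>g. \<lambda>x. if x \<in> X then g x else (0::bit)"
  have eq: "{f :: 'c \<Rightarrow> bit. \<forall>x. x \<notin> X \<longrightarrow> f x = 0} = ?E ` (PiE X (\<lambda>_. UNIV))"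
  proof (intro set_eqI iffI)
    fix f :: "'c \<Rightarrow> bit" assume f: "f \<in> {f. \<forall>x. x \<notin> X \<longrightarrow> f x = 0}"
    show "f \<in> ?E ` (PiE X (\<lambda>_. UNIV))"
      apply (rule image_eqI[where x="restrict f X"])
      using f by (auto intro!: ext)
  qed auto
  have inj: "inj_on ?E (PiE X (\<lambda>_. UNIV))"
  proof (rule inj_onI)
    fix g h assume g: "g \<in> PiE X (\<lambda>_. UNIV)" and h: "h \<in> PiE X (\<lambda>_. UNIV)" and e: "?E g = ?E h"
    show "g = h"
    proof
      fix x show "g x = h x"
        using g h fun_cong[OF e, of x] by (cases "x \<in> X") (auto simp: PiE_def extensional_def)
    qed
  qed
  have "card (PiE X (\<lambda>_. UNIV :: bit set)) = 2 ^ card X"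
    by (simp add: card_PiE card_UNIV_bit)
  then show ?thesis unfolding eq using card_image[OF inj] by simp
qed

lemma card_rspan_le:
  assumes "finite H"
  shows "card (rspan H :: ('c::finite \<Rightarrow> bit) set) \<le> 2 ^ card H"
proof -
  let ?S = "\<lambda>c. \<lambda>x. \<Sum>g\<in>H. c g * g x"
  have "rspan H \<subseteq> ?S ` (PiE H (\<lambda>_. UNIV))"
  proof
    fix u assume "u \<in> rspan H"
    then obtain F c where F: "finite F" "F \<subseteq> H" and u: "u = (\<lambda>x. \<Sum>g\<in>F. c g * g x)"
      unfolding rspan_def by blast
    let ?c = "restrict (\<lambda>g. if g \<in> F then c g else 0) H"
    have "u = ?S ?c"
    proof
      fix x
      have "(\<Sum>g\<in>H. ?c g * g x) = (\<Sum>g\<in>H. (if g \<in> F then c g * g x else 0))"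
        by (intro sum.cong) auto
      also have "\<dots> = (\<Sum>g\<in>F. c g * g x)"
        using F assms by (simp add: sum.If_cases Int_absorb1)
      finally show "u x = ?S ?c x" using u by simp
    qed
    then show "u \<in> ?S ` (PiE H (\<lambda>_. UNIV))"
      by (intro image_eqI[where x="?c"]) auto
  qed
  then have "card (rspan H) \<le> card (?S ` (PiE H (\<lambda>_. UNIV)))" by (rule card_mono[rotated]) simp
  also have "\<dots> \<le> card (PiE H (\<lambda>_. UNIV :: bit set))" by (rule card_image_le) (simp add: finite_PiE assms)
  also have "\<dots> = 2 ^ card H" by (simp add: card_PiE assms card_UNIV_bit)
  finally show ?thesis .
qed

definition piX :: "'c set \<Rightarrow> ('c \<Rightarrow> bit fps) \<Rightarrow> ('c \<Rightarrow> bit)" where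
  "piX X w = (\<lambda>x. if x \<in> X then w x $ 0 else 0)"

lemma piX_sum: "piX X (\<lambda>x. \<Sum>g\<in>F. c g * g x) = (\<lambda>x. \<Sum>g\<in>F. (c g $ 0) * piX X g x)"
  unfolding piX_def by (auto intro!: ext simp: fps_sum_nth sum_distrib_left)

lemma piX_add: "piX X (\<lambda>x. u x + w x) = (\<lambda>x. piX X u x + piX X w x)"
  unfolding piX_def by auto

lemma lower_bound_pi:
  fixes X :: "'c::finite set"
  assumes G: "gens M N G" and N0: "\<And>n. n \<in> N \<Longrightarrow> piX X n = (\<lambda>_. 0)"
    and S: "{f. \<forall>x. x \<notin> X \<longrightarrow> f x = 0} \<subseteq> piX X ` M"
  shows "card X \<le> card G"
proof -
  have sub: "piX X ` M \<subseteq> rspan (piX X ` G)"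
  proof
    fix f assume "f \<in> piX X ` M"
    then obtain m where m: "m \<in> M" "f = piX X m" by blast
    then obtain u w where uw: "u \<in> rspan G" "w \<in> N" "m = (\<lambda>x. u x + w x)"
      using G unfolding gens_def by blast
    from uw(1) obtain F c where F: "finite F" "F \<subseteq> G" and u: "u = (\<lambda>x. \<Sum>g\<in>F. c g * g x)"
      unfolding rspan_def by blast
    have f: "f = (\<lambda>x. \<Sum>g\<in>F. (c g $ 0) * piX X g x)"
      using m(2) uw(3) u N0[OF uw(2)] by (simp only: piX_add piX_sum add_0_right)
    have "(\<lambda>x. \<Sum>g\<in>F. (c g $ 0) * piX X g x) \<in> rspan (piX X ` G)"
    proof -
      let ?d = "\<lambda>h. \<Sum>g\<in>{g\<in>F. piX X g = h}. c g $ 0"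
      have "(\<lambda>x. \<Sum>g\<in>F. (c g $ 0) * piX X g x) = (\<lambda>x. \<Sum>h\<in>piX X ` F. ?d h * h x)"
      proof
        fix x
        have "(\<Sum>g\<in>F. (c g $ 0) * piX X g x) = (\<Sum>h\<in>piX X ` F. \<Sum>g\<in>{g\<in>F. piX X g = h}. (c g $ 0) * piX X g x)"
          using F(1) by (rule sum.image_gen)
        also have "\<dots> = (\<Sum>h\<in>piX X ` F. ?d h * h x)"
        proof (rule sum.cong[OF refl])
          fix h assume "h \<in> piX X ` F"
          have "(\<Sum>g\<in>{g\<in>F. piX X g = h}. (c g $ 0) * piX X g x) = (\<Sum>g\<in>{g\<in>F. piX X g = h}. (c g $ 0) * h x)"
            by (rule sum.cong) auto
          then show "(\<Sum>g\<in>{g\<in>F. piX X g = h}. (c g $ 0) * piX X g x) = ?d h * h x"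
            by (simp only: sum_distrib_right)
        qed
        finally show "(\<Sum>g\<in>F. (c g $ 0) * piX X g x) = (\<Sum>h\<in>piX X ` F. ?d h * h x)" .
      qed
      moreover have "finite (piX X ` F)" "piX X ` F \<subseteq> piX X ` G" using F by auto
      ultimately show ?thesis unfolding rspan_def
        by (intro CollectI exI[of _ "piX X ` F"] exI[of _ ?d]) simp
    qed
    then show "f \<in> rspan (piX X ` G)" using f by simp
  qed
  have fG: "finite G" using G unfolding gens_def by simp
  have "2 ^ card X = card {f :: 'c \<Rightarrow> bit. \<forall>x. x \<notin> X \<longrightarrow> f x = 0}" by (simp add: card_supp)
  also have "\<dots> \<le> card (rspan (piX X ` G))" using S sub by (intro card_mono) auto
  also have "\<dots> \<le> 2 ^ card (piX X ` G)" using fG by (intro card_rspan_le) simp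
  also have "\<dots> \<le> 2 ^ card G" using fG by (intro power_increasing card_image_le) auto
  finally have "(2::nat) ^ card X \<le> 2 ^ card G" .
  then show ?thesis by simp
qed




definition NF :: "('c \<Rightarrow> 'c \<Rightarrow> 'r::zero) \<Rightarrow> bool" where
  "NF N \<longleftrightarrow> (\<forall>x y y'. N x y \<noteq> 0 \<longrightarrow> N x y' \<noteq> 0 \<longrightarrow> y = y') \<and>
            (\<forall>x x' y. N x y \<noteq> 0 \<longrightarrow> N x' y \<noteq> 0 \<longrightarrow> x = x') \<and>
            (\<forall>x y z. N x y \<noteq> 0 \<longrightarrow> N y z = 0)"

definition srcs where "srcs N = {x. \<exists>y. N x y \<noteq> 0}"
definition tgts where "tgts N = {y. \<exists>x. N x y \<noteq> 0}"
definition frees where "frees N = - (srcs N \<union> tgts N)"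

definition ev :: "'c \<Rightarrow> 'c \<Rightarrow> 'r::comm_ring_1" where "ev x = (\<lambda>z. if z = x then 1 else 0)"

lemma sum_single:
  assumes "\<And>x. x \<noteq> s \<Longrightarrow> f x = 0"
  shows "(\<Sum>x\<in>(UNIV::'c::finite set). f x) = f s"
proof -
  have "(\<Sum>x\<in>UNIV. f x) = f s + (\<Sum>x\<in>UNIV - {s}. f x)" by (simp add: sum.remove)
  also have "(\<Sum>x\<in>UNIV - {s}. f x) = 0" using assms by (intro sum.neutral) auto
  finally show ?thesis by simp
qed

context
  fixes N :: "'c::finite \<Rightarrow> 'c \<Rightarrow> 'r::comm_ring_1"
  assumes nf: "NF N"
begin

lemma nf_row: "N x y \<noteq> 0 \<Longrightarrow> N x y' \<noteq> 0 \<Longrightarrow> y = y'" using nf unfolding NF_def by blast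
lemma nf_col: "N x y \<noteq> 0 \<Longrightarrow> N x' y \<noteq> 0 \<Longrightarrow> x = x'" using nf unfolding NF_def by blast
lemma nf_sq: "N x y \<noteq> 0 \<Longrightarrow> N y z = 0" using nf unfolding NF_def by blast
lemma nf_sq': "N x y \<noteq> 0 \<Longrightarrow> N z x = 0" using nf unfolding NF_def by blast

lemma nf_src_tgt: "x \<in> srcs N \<Longrightarrow> x \<notin> tgts N"
  unfolding srcs_def tgts_def using nf_sq' by blast

lemma nf_apply_tgt: "N x y \<noteq> 0 \<Longrightarrow> mat_apply N w y = N x y * w x"
  unfolding mat_apply_def
proof (rule sum_single)
  fix x' assume "N x y \<noteq> 0" "x' \<noteq> x"
  then have "N x' y = 0" using nf_col by blast
  then show "N x' y * w x' = 0" by simp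
qed

lemma nf_apply_ntgt: "y \<notin> tgts N \<Longrightarrow> mat_apply N w y = 0"
  unfolding mat_apply_def tgts_def by simp

definition tg where "tg x = (SOME y. N x y \<noteq> 0)"

lemma tg: "x \<in> srcs N \<Longrightarrow> N x (tg x) \<noteq> 0"
  unfolding srcs_def tg_def by (metis (mono_tags, lifting) mem_Collect_eq someI)

lemma tg_eq: "N x y \<noteq> 0 \<Longrightarrow> tg x = y"
  using tg[of x] nf_row[of x y "tg x"] unfolding srcs_def by blast

lemma nf_in_Bs:
  assumes r: "\<And>y. r y \<noteq> 0 \<Longrightarrow> \<exists>x. N x y \<noteq> 0 \<and> (\<exists>b. N x y * b = 1)"
  shows "r \<in> Bs N"
proof -
  define v where "v x = (if x \<in> srcs N then (SOME b. N x (tg x) * b = 1) * r (tg x) else 0)" for x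
  have "mat_apply N v = r"
  proof
    fix y
    show "mat_apply N v y = r y"
    proof (cases "y \<in> tgts N")
      case True
      then obtain x where x: "N x y \<noteq> 0" unfolding tgts_def by blast
      then have xs: "x \<in> srcs N" unfolding srcs_def by blast
      have "mat_apply N v y = N x y * ((SOME b. N x y * b = 1) * r y)"
        using nf_apply_tgt[OF x] xs tg_eq[OF x] unfolding v_def by simp
      also have "\<dots> = r y"
      proof (cases "r y = 0")
        case False
        then obtain x' b where "N x' y \<noteq> 0" "N x' y * b = 1" using r by blast
        then have "N x y * b = 1" using nf_col[OF x] by blast
        then have "N x y * (SOME b. N x y * b = 1) = 1" by (rule someI)
        then show ?thesis by (simp add: mult.assoc[symmetric])
      qed simp
      finally show ?thesis .
    next
      case False
      then have "r y = 0" using r unfolding tgts_def by blast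
      then show ?thesis using nf_apply_ntgt[OF False] by simp
    qed
  qed
  then show ?thesis unfolding Bs_def by (metis rangeI)
qed

end

lemma rspan_restrict:
  fixes w :: "'c::finite \<Rightarrow> 'r::comm_ring_1"
  shows "(\<lambda>y. if y \<in> X then w y else 0) \<in> rspan (ev ` X)"
proof -
  have inj: "inj_on (ev :: 'c \<Rightarrow> 'c \<Rightarrow> 'r) X"
  proof (rule inj_onI)
    fix a b assume "ev a = (ev b :: 'c \<Rightarrow> 'r)"
    then have "ev a a = (ev b a :: 'r)" by simp
    then show "a = b" unfolding ev_def by (auto split: if_splits)
  qed
  have c: "(\<Sum>z\<in>UNIV. ev x z * w z) = w x" for x unfolding ev_def
    by (simp add: if_distrib[where f="\<lambda>a. a * _"] cong: if_cong)
  have "(\<lambda>y. \<Sum>g\<in>ev ` X. (\<lambda>g. \<Sum>z\<in>UNIV. g z * w z) g * g y) = (\<lambda>y. \<Sum>x\<in>X. w x * ev x y)"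
    using inj by (simp add: sum.reindex c)
  also have "\<dots> = (\<lambda>y. if y \<in> X then w y else 0)"
    unfolding ev_def by (auto intro!: ext simp: if_distrib[where f="\<lambda>a. _ * a"] cong: if_cong)
  finally have e: "(\<lambda>y. if y \<in> X then w y else 0) = (\<lambda>y. \<Sum>g\<in>ev ` X. (\<lambda>g. \<Sum>z\<in>UNIV. g z * w z) g * g y)" ..
  show ?thesis unfolding rspan_def e
    by (intro CollectI exI[of _ "ev ` X"] exI[of _ "\<lambda>g. \<Sum>z\<in>UNIV. g z * w z"]) simp
qed




context
  fixes N :: "'c::finite \<Rightarrow> 'c \<Rightarrow> 'r::idom"
  assumes nf: "NF N"
begin

lemma Zs_nf: "Zs N = {w. \<forall>x\<in>srcs N. w x = (0::'r)}"
proof (intro set_eqI iffI)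
  fix w assume w: "w \<in> Zs N"
  show "w \<in> {w. \<forall>x\<in>srcs N. w x = (0::'r)}"
  proof (intro CollectI ballI)
    fix x assume "x \<in> srcs N"
    then obtain y where y: "N x y \<noteq> 0" unfolding srcs_def by blast
    have "mat_apply N w y = 0" using w unfolding Zs_def by simp
    then show "w x = 0" using nf_apply_tgt[OF nf y] y by simp
  qed
next
  fix w assume w: "w \<in> {w. \<forall>x\<in>srcs N. w x = (0::'r)}"
  have "mat_apply N w y = 0" for y
  proof (cases "y \<in> tgts N")
    case True
    then obtain x where x: "N x y \<noteq> 0" unfolding tgts_def by blast
    then have "x \<in> srcs N" unfolding srcs_def by blast
    then show ?thesis using nf_apply_tgt[OF nf x] w by simp
  qed (rule nf_apply_ntgt[OF nf])
  then show "w \<in> Zs N" unfolding Zs_def by auto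
qed

lemma Ts_nf: "Ts N = {w. \<forall>x. x \<notin> tgts N \<longrightarrow> w x = (0::'r)}"
proof (intro set_eqI iffI)
  fix w assume w: "w \<in> Ts N"
  then obtain a u where a: "a \<noteq> 0" "mat_apply N u = (\<lambda>x. a * w x)" unfolding Ts_def Bs_def by auto
  show "w \<in> {w. \<forall>x. x \<notin> tgts N \<longrightarrow> w x = (0::'r)}"
  proof (intro CollectI allI impI)
    fix x assume "x \<notin> tgts N"
    then have "a * w x = 0" using nf_apply_ntgt[OF nf, of x u] a(2) by (metis)
    then show "w x = 0" using a(1) by simp
  qed
next
  fix w assume w: "w \<in> {w. \<forall>x. x \<notin> tgts N \<longrightarrow> w x = (0::'r)}"
  then have wz: "w \<in> Zs N" unfolding Zs_nf using nf_src_tgt[OF nf] by auto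
  define Nz where "Nz = {p. N (fst p) (snd p) \<noteq> 0}"
  define a where "a = (\<Prod>p\<in>Nz. N (fst p) (snd p))"
  have fNz: "finite Nz" by simp
  have a0: "a \<noteq> 0" unfolding a_def using fNz by (simp add: Nz_def)
  define v where "v x = (if x \<in> srcs N then (\<Prod>p\<in>Nz - {(x, tg N x)}. N (fst p) (snd p)) * w (tg N x) else 0)" for x
  have "mat_apply N v y = a * w y" for y
  proof (cases "y \<in> tgts N")
    case True
    then obtain x where x: "N x y \<noteq> 0" unfolding tgts_def by blast
    then have xs: "x \<in> srcs N" unfolding srcs_def by blast
    have xy: "(x, y) \<in> Nz" using x unfolding Nz_def by simp
    have "mat_apply N v y = N x y * ((\<Prod>p\<in>Nz - {(x, y)}. N (fst p) (snd p)) * w y)"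
      using nf_apply_tgt[OF nf x] xs tg_eq[OF nf x] unfolding v_def by simp
    also have "\<dots> = a * w y" unfolding a_def using prod.remove[OF fNz xy, of "\<lambda>p. N (fst p) (snd p)"]
      by (simp add: mult.assoc)
    finally show ?thesis .
  next
    case False
    then show ?thesis using nf_apply_ntgt[OF nf False] w by simp
  qed
  then have "(\<lambda>x. a * w x) \<in> Bs N" unfolding Bs_def by (metis rangeI ext)
  then show "w \<in> Ts N" using wz a0 unfolding Ts_def by blast
qed

end




lemma inj_ev: "inj (ev :: 'c \<Rightarrow> 'c \<Rightarrow> 'r::comm_ring_1)"
proof (rule injI)
  fix a b assume "ev a = (ev b :: 'c \<Rightarrow> 'r)"
  then have "ev a a = (ev b a :: 'r)" by simp
  then show "a = b" unfolding ev_def by (auto split: if_splits)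
qed

lemma card_ev: "card (ev ` X :: ('c \<Rightarrow> 'r::comm_ring_1) set) = card X"
  by (rule card_image) (rule inj_on_subset[OF inj_ev], simp)

lemma split_restrict:
  fixes w :: "'c \<Rightarrow> 'r::monoid_add"
  shows "w = (\<lambda>x. (if x \<in> X then w x else 0) + (if x \<in> X then 0 else w x))"
  by (auto intro!: ext)

lemma mem_sumset: "u \<in> U \<Longrightarrow> t \<in> T \<Longrightarrow> w = (\<lambda>x. u x + t x) \<Longrightarrow> w \<in> {(\<lambda>x. u x + w x) | u w. u \<in> U \<and> w \<in> T}"
  by blast

definition TT where "TT N = {y. \<exists>x. N x y \<noteq> 0 \<and> N x y $ 0 = 0}"

context
  fixes N :: "'c::finite \<Rightarrow> 'c \<Rightarrow> bit fps"
  assumes nf: "NF N"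
begin

lemma mg_free: "is_mg (Zs N) (Ts N) (card (frees N))"
  unfolding is_mg_def
proof (intro conjI allI impI)
  have g: "gens (Zs N) (Ts N) (ev ` frees N)"
    unfolding gens_def
  proof (intro conjI)
    show "ev ` frees N \<subseteq> Zs N" unfolding Zs_nf[OF nf] frees_def ev_def by auto
    show "Zs N \<subseteq> {(\<lambda>x. u x + w x) | u w. u \<in> rspan (ev ` frees N) \<and> w \<in> Ts N}"
    proof
      fix w assume w: "w \<in> Zs N"
      have "(\<lambda>x. if x \<in> frees N then 0 else w x) \<in> Ts N"
        using w unfolding Ts_nf[OF nf] Zs_nf[OF nf] frees_def by auto
      then show "w \<in> {(\<lambda>x. u x + w x) | u w. u \<in> rspan (ev ` frees N) \<and> w \<in> Ts N}"
        by (rule mem_sumset[OF rspan_restrict[of "frees N" w]]) (rule split_restrict)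
    qed
  qed simp
  then show "\<exists>G. gens (Zs N) (Ts N) G \<and> card G = card (frees N)" using card_ev by blast
next
  fix G assume G: "gens (Zs N) (Ts N) G"
  show "card (frees N) \<le> card G"
  proof (rule lower_bound_pi[OF G])
    fix n assume "n \<in> Ts N"
    then show "piX (frees N) n = (\<lambda>_. 0)"
      unfolding Ts_nf[OF nf] piX_def frees_def by auto
  next
    show "{f. \<forall>x. x \<notin> frees N \<longrightarrow> f x = 0} \<subseteq> piX (frees N) ` Zs N"
    proof
      fix f :: "'c \<Rightarrow> bit" assume f: "f \<in> {f. \<forall>x. x \<notin> frees N \<longrightarrow> f x = 0}"
      have "(\<lambda>x. fps_const (f x)) \<in> Zs N" using f unfolding Zs_nf[OF nf] frees_def by auto
      moreover have "f = piX (frees N) (\<lambda>x. fps_const (f x))" using f unfolding piX_def by auto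
      ultimately show "f \<in> piX (frees N) ` Zs N" by blast
    qed
  qed
qed

lemma mg_tor: "is_mg (Ts N) (Bs N) (card (TT N))"
  unfolding is_mg_def
proof (intro conjI allI impI)
  have g: "gens (Ts N) (Bs N) (ev ` TT N)"
    unfolding gens_def
  proof (intro conjI)
    show "ev ` TT N \<subseteq> Ts N" unfolding Ts_nf[OF nf] TT_def tgts_def ev_def by auto
    show "Ts N \<subseteq> {(\<lambda>x. u x + w x) | u w. u \<in> rspan (ev ` TT N) \<and> w \<in> Bs N}"
    proof
      fix w assume w: "w \<in> Ts N"
      have "(\<lambda>x. if x \<in> TT N then 0 else w x) \<in> Bs N"
      proof (rule nf_in_Bs[OF nf])
        fix y assume y: "(if y \<in> TT N then 0 else w y) \<noteq> 0"
        then have "y \<in> tgts N" "y \<notin> TT N" using w unfolding Ts_nf[OF nf] by (auto split: if_splits)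
        then obtain x where x: "N x y \<noteq> 0" "N x y $ 0 \<noteq> 0" unfolding tgts_def TT_def by blast
        then show "\<exists>x. N x y \<noteq> 0 \<and> (\<exists>b. N x y * b = 1)" using inverse_mult_eq_1' by blast
      qed
      then show "w \<in> {(\<lambda>x. u x + w x) | u w. u \<in> rspan (ev ` TT N) \<and> w \<in> Bs N}"
        by (rule mem_sumset[OF rspan_restrict[of "TT N" w]]) (rule split_restrict)
    qed
  qed simp
  then show "\<exists>G. gens (Ts N) (Bs N) G \<and> card G = card (TT N)" using card_ev by blast
next
  fix G assume G: "gens (Ts N) (Bs N) G"
  show "card (TT N) \<le> card G"
  proof (rule lower_bound_pi[OF G])
    fix n assume "n \<in> Bs N"
    then obtain v where n: "n = mat_apply N v" unfolding Bs_def by blast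
    show "piX (TT N) n = (\<lambda>_. 0)"
    proof
      fix y show "piX (TT N) n y = 0"
      proof (cases "y \<in> TT N")
        case True
        then obtain x where x: "N x y \<noteq> 0" "N x y $ 0 = 0" unfolding TT_def by blast
        show ?thesis using True x nf_apply_tgt[OF nf x(1)] unfolding piX_def n by simp
      qed (simp add: piX_def)
    qed
  next
    show "{f. \<forall>x. x \<notin> TT N \<longrightarrow> f x = 0} \<subseteq> piX (TT N) ` Ts N"
    proof
      fix f :: "'c \<Rightarrow> bit" assume f: "f \<in> {f. \<forall>x. x \<notin> TT N \<longrightarrow> f x = 0}"
      have "(\<lambda>x. fps_const (f x)) \<in> Ts N" using f unfolding Ts_nf[OF nf] TT_def tgts_def by auto
      moreover have "f = piX (TT N) (\<lambda>x. fps_const (f x))" using f unfolding piX_def by auto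
      ultimately show "f \<in> piX (TT N) ` Ts N" by blast
    qed
  qed
qed

end




lemma mg_bit:
  fixes N :: "'c::finite \<Rightarrow> 'c \<Rightarrow> bit"
  assumes nf: "NF N"
  shows "is_mg (Zs N) (Bs N) (card (frees N))"
  unfolding is_mg_def
proof (intro conjI allI impI)
  have g: "gens (Zs N) (Bs N) (ev ` frees N)"
    unfolding gens_def
  proof (intro conjI)
    show "ev ` frees N \<subseteq> Zs N" unfolding Zs_nf[OF nf] frees_def ev_def by auto
    show "Zs N \<subseteq> {(\<lambda>x. u x + w x) | u w. u \<in> rspan (ev ` frees N) \<and> w \<in> Bs N}"
    proof
      fix w assume w: "w \<in> Zs N"
      have "(\<lambda>x. if x \<in> frees N then 0 else w x) \<in> Bs N"
      proof (rule nf_in_Bs[OF nf])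
        fix y assume y: "(if y \<in> frees N then 0 else w y) \<noteq> 0"
        then have "y \<in> tgts N" using w unfolding Zs_nf[OF nf] frees_def by (auto split: if_splits)
        then obtain x where x: "N x y \<noteq> 0" unfolding tgts_def by blast
        then have "N x y * inverse (N x y) = 1" by simp
        then show "\<exists>x. N x y \<noteq> 0 \<and> (\<exists>b. N x y * b = 1)" using x by blast
      qed
      then show "w \<in> {(\<lambda>x. u x + w x) | u w. u \<in> rspan (ev ` frees N) \<and> w \<in> Bs N}"
        by (rule mem_sumset[OF rspan_restrict[of "frees N" w]]) (rule split_restrict)
    qed
  qed simp
  then show "\<exists>G. gens (Zs N) (Bs N) G \<and> card G = card (frees N)" using card_ev by blast
next
  fix G assume G: "gens (Zs N) (Bs N) G"
  have fG: "finite G" using G unfolding gens_def by simp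
  have sub: "Zs N \<subseteq> (\<lambda>(u, t). \<lambda>x. u x + t x) ` (rspan G \<times> Bs N)"
    using G unfolding gens_def by fastforce
  have cZ: "card (Zs N) = 2 ^ card (- srcs N)"
  proof -
    have "Zs N = {f. \<forall>x. x \<notin> - srcs N \<longrightarrow> f x = 0}" unfolding Zs_nf[OF nf] by auto
    then show ?thesis using card_supp[of "- srcs N"] by (simp only:)
  qed
  have cB: "card (Bs N) \<le> 2 ^ card (tgts N)"
  proof -
    have "Bs N \<subseteq> {f. \<forall>x. x \<notin> tgts N \<longrightarrow> f x = 0}"
      unfolding Bs_def using nf_apply_ntgt[OF nf] by auto
    then have "card (Bs N) \<le> card {f :: 'c \<Rightarrow> bit. \<forall>x. x \<notin> tgts N \<longrightarrow> f x = 0}" by (intro card_mono) auto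
    then show ?thesis by (simp add: card_supp)
  qed
  have "card (Zs N) \<le> card ((\<lambda>(u, t). \<lambda>x. u x + t x) ` (rspan G \<times> Bs N))" using sub by (intro card_mono) auto
  also have "\<dots> \<le> card (rspan G \<times> Bs N)" by (rule card_image_le) auto
  also have "\<dots> = card (rspan G) * card (Bs N)" by (rule card_cartesian_product)
  also have "\<dots> \<le> 2 ^ card G * 2 ^ card (tgts N)" by (intro mult_mono card_rspan_le fG cB) auto
  finally have "(2::nat) ^ card (- srcs N) \<le> 2 ^ (card G + card (tgts N))" unfolding cZ by (simp add: power_add)
  then have le: "card (- srcs N) \<le> card G + card (tgts N)" by simp
  have "- srcs N = frees N \<union> tgts N" unfolding frees_def using nf_src_tgt[OF nf] by auto
  moreover have "frees N \<inter> tgts N = {}" unfolding frees_def by auto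
  ultimately have "card (- srcs N) = card (frees N) + card (tgts N)" by (simp add: card_Un_disjoint)
  then show "card (frees N) \<le> card G" using le by simp
qed


lemma sum_idm_left: "(\<Sum>y\<in>UNIV. idm (a::'c::finite) y * f y) = (f a :: 'r::comm_ring_1)"
proof -
  have "(\<Sum>y\<in>UNIV. idm a y * f y) = idm a a * f a" by (rule sum_single) (simp add: idm_def)
  then show ?thesis by (simp add: idm_def)
qed
lemma sum_idm_right: "(\<Sum>y\<in>UNIV. f y * idm y (a::'c::finite)) = (f a :: 'r::comm_ring_1)"
proof -
  have "(\<Sum>y\<in>UNIV. f y * idm y a) = f a * idm a a" by (rule sum_single) (simp add: idm_def)
  then show ?thesis by (simp add: idm_def)
qed

lemma sum_idm_left': "(\<Sum>y\<in>UNIV. idm y (a::'c::finite) * f y) = (f a :: 'r::comm_ring_1)"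
proof -
  have "(\<Sum>y\<in>UNIV. idm y a * f y) = idm a a * f a" by (rule sum_single) (simp add: idm_def)
  then show ?thesis by (simp add: idm_def)
qed
lemma sum_idm_right': "(\<Sum>y\<in>UNIV. f y * idm (a::'c::finite) y) = (f a :: 'r::comm_ring_1)"
proof -
  have "(\<Sum>y\<in>UNIV. f y * idm a y) = f a * idm a a" by (rule sum_single) (simp add: idm_def)
  then show ?thesis by (simp add: idm_def)
qed

lemma sum_idm_mid: "(\<Sum>y\<in>UNIV. f y * (idm y (a::'c::finite) * c)) = (f a * c :: 'r::comm_ring_1)"
  using sum_idm_right[of "\<lambda>y. f y * c" a] by (simp add: ac_simps)
lemma sum_idm_mid': "(\<Sum>y\<in>UNIV. f y * (idm (a::'c::finite) y * c)) = (f a * c :: 'r::comm_ring_1)"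
  using sum_idm_right'[of "\<lambda>y. f y * c" a] by (simp add: ac_simps)

lemmas sum_idms = sum_idm_left sum_idm_right sum_idm_left' sum_idm_right' sum_idm_mid sum_idm_mid'

lemma sum_ite2:
  assumes "i \<noteq> j"
  shows "(\<Sum>y\<in>(UNIV::'c::finite set). if y = i then A y else if y = j then B y else C y) =
     A i + B j + (\<Sum>y\<in>UNIV. C y) - C i - (C j :: 'r::comm_ring_1)"
proof -
  have "(\<Sum>y\<in>(UNIV::'c set). if y = i then A y else if y = j then B y else C y)
      = (\<Sum>y\<in>UNIV. (if y = i then A y - C y else 0) + (if y = j then B y - C y else 0) + C y)"
    using assms by (intro sum.cong) auto
  also have "\<dots> = A i + B j + (\<Sum>y\<in>UNIV. C y) - C i - C j"
    by (simp add: sum.distrib)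
  finally show ?thesis .
qed

definition Pm :: "'c \<Rightarrow> 'c \<Rightarrow> ('c \<Rightarrow> 'r) \<Rightarrow> ('c \<Rightarrow> 'r) \<Rightarrow> 'c \<Rightarrow> 'c \<Rightarrow> 'r::comm_ring_1" where
  "Pm i j g h = (\<lambda>x y. if x = i then idm i y else if x = j then g y else idm x y - h x * idm i y)"
definition Qm :: "'c \<Rightarrow> 'c \<Rightarrow> ('c \<Rightarrow> 'r) \<Rightarrow> ('c \<Rightarrow> 'r) \<Rightarrow> 'c \<Rightarrow> 'c \<Rightarrow> 'r::comm_ring_1" where
  "Qm i j g h = (\<lambda>y x. if x = i then h y else if x = j then idm y j else idm y x - idm y j * g x)"

context
  fixes i j :: "'c::finite" and g h :: "'c \<Rightarrow> 'r::comm_ring_1"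
  assumes ij: "i \<noteq> j" and gj: "g j = 1" and hi: "h i = 1" and gh: "(\<Sum>y\<in>UNIV. g y * h y) = 0"
begin

lemma idm_simps: "idm a a = 1" "a \<noteq> b \<Longrightarrow> idm a b = 0"
  unfolding idm_def by auto

lemma PQ: "mmul (Pm i j g h) (Qm i j g h) = idm"
proof (intro ext)
  fix x z
  show "mmul (Pm i j g h) (Qm i j g h) x z = idm x z"
    unfolding mmul_def Pm_def
    using ij gj hi gh
    by (cases "x = i"; cases "x = j"; cases "z = i"; cases "z = j") (simp_all add: Qm_def sum_subtractf sum.distrib right_diff_distrib left_diff_distrib
        mult.assoc sum_distrib_left[symmetric] sum_idms idm_simps)
qed

lemma gh': "(\<Sum>y\<in>UNIV. g y * (h y * c)) = 0"
proof -
  have "(\<Sum>y\<in>UNIV. g y * (h y * c)) = (\<Sum>y\<in>UNIV. g y * h y) * c"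
    by (simp add: sum_distrib_right mult.assoc)
  then show ?thesis using gh by simp
qed

lemma ite_mult2: "(if x = i then a else if x = j then b else c) * (if x = i then a' else if x = j then b' else c') =
   (if x = i then a * a' else if x = j then b * b' else c * (c' :: 'r))"
  by auto

lemma QP: "mmul (Qm i j g h) (Pm i j g h) = idm"
proof (intro ext)
  fix y z
  show "mmul (Qm i j g h) (Pm i j g h) y z = idm y z"
    unfolding mmul_def Pm_def Qm_def ite_mult2 sum_ite2[OF ij]
    using ij gj hi gh gh'
    by (cases "y = i"; cases "y = j"; cases "z = i"; cases "z = j") (simp_all add: sum_subtractf sum.distrib right_diff_distrib left_diff_distrib
        mult.assoc sum_distrib_left[symmetric] sum_idms idm_simps)
qed

context
  fixes M :: "'c \<Rightarrow> 'c \<Rightarrow> 'r" and c :: 'r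
  assumes rowi: "\<And>y. M i y = c * g y" and colj: "\<And>x. M x j = c * h x"
    and gM: "\<And>z. (\<Sum>y\<in>UNIV. g y * M y z) = 0" and Mh: "\<And>x. (\<Sum>y\<in>UNIV. M x y * h y) = 0"
begin

lemma PM_i: "mmul (Pm i j g h) M i z = c * g z"
  unfolding mmul_def Pm_def by (simp add: sum_idms rowi)
lemma PM_j: "mmul (Pm i j g h) M j z = 0"
  unfolding mmul_def Pm_def using ij gM by simp
lemma PM_o: "x \<noteq> i \<Longrightarrow> x \<noteq> j \<Longrightarrow> mmul (Pm i j g h) M x z = M x z - h x * (c * g z)"
  unfolding mmul_def Pm_def by (simp add: sum_subtractf left_diff_distrib mult.assoc sum_distrib_left[symmetric] sum_idms rowi)

definition "N1 = mmul (mmul (Pm i j g h) M) (Qm i j g h)"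

lemma N1_i: "N1 i w = c * idm j w"
proof -
  have "N1 i w = (\<Sum>z\<in>UNIV. c * g z * Qm i j g h z w)"
    unfolding N1_def mmul_def[of "mmul _ _"] PM_i ..
  also have "\<dots> = c * mmul (Pm i j g h) (Qm i j g h) j w"
    unfolding mmul_def Pm_def using ij by (simp add: sum_distrib_left mult.assoc)
  finally show ?thesis using PQ by simp
qed

lemma N1_j: "N1 j w = 0"
  unfolding N1_def mmul_def[of "mmul _ _"] PM_j by simp

lemma N1_ci: "N1 x i = 0"
proof (cases "x = i \<or> x = j")
  case True
  then show ?thesis using N1_i N1_j ij by (auto simp: idm_def)
next
  case False
  then have "N1 x i = (\<Sum>z\<in>UNIV. (M x z - h x * (c * g z)) * h z)"
    unfolding N1_def mmul_def[of "mmul _ _"] using PM_o ij by (simp add: Qm_def)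
  also have "\<dots> = 0" using Mh gh by (simp add: left_diff_distrib sum_subtractf mult.assoc sum_distrib_left[symmetric])
  finally show ?thesis .
qed

lemma N1_cj: "x \<noteq> i \<Longrightarrow> N1 x j = 0"
proof (cases "x = j")
  case True
  then show ?thesis using N1_j by simp
next
  case False
  assume xi: "x \<noteq> i"
  then have "N1 x j = (\<Sum>z\<in>UNIV. (M x z - h x * (c * g z)) * idm z j)"
    unfolding N1_def mmul_def[of "mmul _ _"] using PM_o False ij by (simp add: Qm_def)
  also have "\<dots> = 0" using colj gj by (simp add: sum_idms)
  finally show ?thesis .
qed

end

end




lemma pivot:
  fixes M :: "'c::finite \<Rightarrow> 'c \<Rightarrow> bit fps"
  assumes MM: "mmul M M = (\<lambda>_ _. 0)" and nz: "M x0 y0 \<noteq> 0"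
  shows "\<exists>i j c g h. i \<noteq> j \<and> c \<noteq> 0 \<and> M i j = c \<and> (\<forall>y. M i y = c * g y) \<and> (\<forall>x. M x j = c * h x) \<and> g j = 1 \<and> h i = 1"
proof -
  define S where "S = {p. M (fst p) (snd p) \<noteq> 0}"
  define k where "k = Min ((\<lambda>p. subdegree (M (fst p) (snd p))) ` S)"
  have fS: "finite S" by simp
  have neS: "S \<noteq> {}" using nz unfolding S_def by auto
  have "k \<in> (\<lambda>p. subdegree (M (fst p) (snd p))) ` S" unfolding k_def using fS neS by (intro Min_in) auto
  then obtain p where pk': "k = subdegree (M (fst p) (snd p))" and pS: "p \<in> S" by (rule imageE)
  have pk: "subdegree (M (fst p) (snd p)) = k" using pk' by simp
  have kle: "M x y \<noteq> 0 \<Longrightarrow> k \<le> subdegree (M x y)" for x y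
  proof -
    assume "M x y \<noteq> 0"
    then have "(x, y) \<in> S" unfolding S_def by simp
    then have "subdegree (M x y) \<in> (\<lambda>p. subdegree (M (fst p) (snd p))) ` S"
      by (rule image_eqI[rotated]) simp
    then show ?thesis unfolding k_def using fS by (intro Min_le) auto
  qed
  define H where "H x y = fps_shift k (M x y)" for x y
  have hM: "M x y = H x y * fps_X ^ k" for x y
  proof (cases "M x y = 0")
    case True then show ?thesis unfolding H_def by simp
  next
    case False then show ?thesis unfolding H_def using kle fps_shift_times_fps_X_power by metis
  qed
  have Hp: "H (fst p) (snd p) $ 0 \<noteq> 0"
  proof -
    have "M (fst p) (snd p) \<noteq> 0" using pS unfolding S_def by simp
    then have "M (fst p) (snd p) $ k \<noteq> 0" using pk nth_subdegree_nonzero by metis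
    then show ?thesis unfolding H_def by (simp del: bit_not_zero_iff)
  qed
  have HH: "(\<Sum>y\<in>UNIV. H x y * H y z) = 0" for x z
  proof -
    have "0 = mmul M M x z" using MM by simp
    also have "\<dots> = (\<Sum>y\<in>UNIV. H x y * H y z) * (fps_X ^ k * fps_X ^ k)"
      unfolding mmul_def hM sum_distrib_right by (rule sum.cong) (simp_all add: ac_simps)
    finally show ?thesis by simp
  qed
  have HH0: "(\<Sum>y\<in>UNIV. H x y $ 0 * H y z $ 0) = 0" for x z
    using arg_cong[OF HH[of x z], of "\<lambda>f. f $ 0"] by (simp add: fps_sum_nth)
  obtain i j where ij: "i \<noteq> j" and Hij: "H i j $ 0 \<noteq> 0"
  proof (cases "fst p = snd p")
    case False show ?thesis by (rule that[OF False Hp])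
  next
    case True
    note th = that
    define a where "a = fst p"
    have Haa: "H a a $ 0 \<noteq> 0" using Hp True unfolding a_def by simp
    show ?thesis
    proof (rule ccontr)
      assume nt: "\<not> ?thesis"
      have off: "H a y $ 0 = 0" if ya: "y \<noteq> a" for y
      proof (rule ccontr)
        assume "H a y $ 0 \<noteq> 0"
        with ya have thesis by (intro th) auto
        with nt show False by simp
      qed
      have "(\<Sum>y\<in>UNIV. H a y $ 0 * H y a $ 0) = H a a $ 0 * H a a $ 0"
        by (rule sum_single) (simp add: off)
      then show False using HH0[of a a] Haa by simp
    qed
  qed
  define u where "u = H i j"
  have u1: "u * inverse u = 1" using Hij unfolding u_def by (rule inverse_mult_eq_1')
  define c where "c = M i j"
  have c: "c = u * fps_X ^ k" unfolding c_def u_def by (rule hM)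
  have c0: "c \<noteq> 0" using u1 c by auto
  define g where "g y = H i y * inverse u" for y
  define h where "h x = H x j * inverse u" for x
  have "M i y = c * g y" for y
  proof -
    have "c * g y = (u * inverse u) * (H i y * fps_X ^ k)" unfolding c g_def by (simp add: ac_simps)
    then show ?thesis using u1 hM by simp
  qed
  moreover have "M x j = c * h x" for x
  proof -
    have "c * h x = (u * inverse u) * (H x j * fps_X ^ k)" unfolding c h_def by (simp add: ac_simps)
    then show ?thesis using u1 hM by simp
  qed
  moreover have "g j = 1" "h i = 1" using u1 unfolding g_def h_def u_def by simp_all
  ultimately show ?thesis using ij c0 c_def by blast
qed




definition supp :: "'c set \<Rightarrow> ('c \<Rightarrow> 'c \<Rightarrow> 'r::zero) \<Rightarrow> bool" where
  "supp U M \<longleftrightarrow> (\<forall>x y. M x y \<noteq> 0 \<longrightarrow> x \<in> U \<and> y \<in> U)"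
definition fixU :: "'c set \<Rightarrow> ('c \<Rightarrow> 'c \<Rightarrow> 'r::comm_ring_1) \<Rightarrow> bool" where
  "fixU U P \<longleftrightarrow> (\<forall>x y. (x \<notin> U \<or> y \<notin> U) \<longrightarrow> P x y = idm x y)"

lemma mmul_fix_left:
  assumes "fixU U P" "x \<notin> U" shows "mmul P X x z = X x (z::'c::finite)"
proof -
  have "mmul P X x z = (\<Sum>y\<in>UNIV. idm x y * X y z)"
    unfolding mmul_def using assms unfolding fixU_def by simp
  then show ?thesis by (simp add: sum_idms)
qed

lemma mmul_fix_right:
  assumes "fixU U P" "z \<notin> U" shows "mmul X P x z = X x (z::'c::finite)"
proof -
  have "mmul X P x z = (\<Sum>y\<in>UNIV. X x y * idm y z)"
    unfolding mmul_def using assms unfolding fixU_def by simp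
  then show ?thesis by (simp add: sum_idms)
qed

lemma fixU_mono: "U' \<subseteq> U \<Longrightarrow> fixU U' P \<Longrightarrow> fixU U P"
  unfolding fixU_def by blast

lemma fixU_mmul:
  fixes A B :: "'c::finite \<Rightarrow> 'c \<Rightarrow> 'r::comm_ring_1"
  assumes "fixU U A" "fixU U B" shows "fixU U (mmul A B)"
  unfolding fixU_def
proof (intro allI impI)
  fix x y assume "x \<notin> U \<or> y \<notin> U"
  then show "mmul A B x y = idm x y"
  proof
    assume "x \<notin> U" then show ?thesis using mmul_fix_left[OF assms(1)] assms(2) unfolding fixU_def by simp
  next
    assume "y \<notin> U" then show ?thesis using mmul_fix_right[OF assms(2)] assms(1) unfolding fixU_def by simp
  qed
qed

lemma supp_conj:
  fixes P Q M :: "'c::finite \<Rightarrow> 'c \<Rightarrow> 'r::comm_ring_1"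
  assumes P: "fixU U P" and Q: "fixU U Q" and M: "supp U M"
  shows "supp U (mmul (mmul P M) Q)"
  unfolding supp_def
proof (intro allI impI)
  fix x y assume nz: "mmul (mmul P M) Q x y \<noteq> 0"
  show "x \<in> U \<and> y \<in> U"
  proof (rule ccontr)
    assume "\<not> (x \<in> U \<and> y \<in> U)"
    then have "x \<notin> U \<or> y \<notin> U" by blast
    then have "mmul (mmul P M) Q x y = 0"
    proof
      assume x: "x \<notin> U"
      have "mmul P M x z = 0" for z using mmul_fix_left[OF P x] M x unfolding supp_def by auto
      then show ?thesis unfolding mmul_def[of "mmul P M"] by simp
    next
      assume y: "y \<notin> U"
      have "mmul (mmul P M) Q x y = mmul P M x y" by (rule mmul_fix_right[OF Q y])
      also have "\<dots> = 0" unfolding mmul_def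
      proof (rule sum.neutral, intro ballI)
        fix w have "M w y = 0" using M y unfolding supp_def by blast
        then show "P x w * M w y = 0" by simp
      qed
      finally show ?thesis .
    qed
    with nz show False by simp
  qed
qed

lemma mmul_add_left: "mmul (\<lambda>x y. A x y + B x y) C = (\<lambda>x y. mmul A C x y + mmul B C x y)"
  unfolding mmul_def by (auto intro!: ext simp: distrib_right sum.distrib)
lemma mmul_add_right: "mmul C (\<lambda>x y. A x y + B x y) = (\<lambda>x y. mmul C A x y + mmul C B x y)"
  unfolding mmul_def by (auto intro!: ext simp: distrib_left sum.distrib)




lemma mmul_zero_left[simp]: "mmul (\<lambda>_ _. 0) X = (\<lambda>_ _. 0)" unfolding mmul_def by simp
lemma mmul_zero_right[simp]: "mmul X (\<lambda>_ _. 0) = (\<lambda>_ _. 0)" unfolding mmul_def by simp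

lemma inv_cancel: "mmul A B = idm \<Longrightarrow> mmul A (mmul B X) = X"
  by (metis mmul_assoc mmul_idm_left)

lemma nf_aux:
  fixes M :: "'c::finite \<Rightarrow> 'c \<Rightarrow> bit fps"
  shows "card U = m \<Longrightarrow> supp U M \<Longrightarrow> mmul M M = (\<lambda>_ _. 0) \<Longrightarrow>
    \<exists>P Q N. mmul P Q = idm \<and> mmul Q P = idm \<and> mmul P M = mmul N P \<and> NF N \<and> supp U N \<and> fixU U P \<and> fixU U Q"
proof (induction m arbitrary: U M rule: less_induct)
  case (less m U M)
  show ?case
  proof (cases "\<exists>x y. M x y \<noteq> 0")
    case False
    then have M0: "M = (\<lambda>_ _. 0)" by auto
    have "NF (\<lambda>_ _. 0 :: bit fps)" unfolding NF_def by simp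
    moreover have "supp U (\<lambda>_ _. 0 :: bit fps)" unfolding supp_def by simp
    moreover have "fixU U (idm :: 'c \<Rightarrow> 'c \<Rightarrow> bit fps)" unfolding fixU_def by simp
    ultimately show ?thesis using M0 by (intro exI[of _ idm] exI[of _ "\<lambda>_ _. 0"]) simp
  next
    case True
    then obtain x0 y0 where "M x0 y0 \<noteq> 0" by blast
    from pivot[OF less.prems(3) this] obtain i j c g h where
      ij: "i \<noteq> j" and c0: "c \<noteq> 0" and Mij: "M i j = c" and rowi: "\<And>y. M i y = c * g y"
      and colj: "\<And>x. M x j = c * h x" and gj: "g j = 1" and hi: "h i = 1" by blast
    have iU: "i \<in> U" and jU: "j \<in> U" using less.prems(2) Mij c0 unfolding supp_def by auto
    have gU: "g y = 0" if "y \<notin> U" for y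
    proof -
      have "M i y = 0" using less.prems(2) that unfolding supp_def by blast
      then show ?thesis using rowi[of y] c0 by simp
    qed
    have hU: "h x = 0" if "x \<notin> U" for x
    proof -
      have "M x j = 0" using less.prems(2) that unfolding supp_def by blast
      then show ?thesis using colj[of x] c0 by simp
    qed
    have gM: "(\<Sum>y\<in>UNIV. g y * M y z) = 0" for z
    proof -
      have "0 = mmul M M i z" using less.prems(3) by simp
      also have "\<dots> = c * (\<Sum>y\<in>UNIV. g y * M y z)" unfolding mmul_def rowi by (simp add: sum_distrib_left mult.assoc)
      finally show ?thesis using c0 by simp
    qed
    have Mh: "(\<Sum>y\<in>UNIV. M x y * h y) = 0" for x
    proof -
      have "0 = mmul M M x j" using less.prems(3) by simp
      also have "\<dots> = c * (\<Sum>y\<in>UNIV. M x y * h y)" unfolding mmul_def colj by (simp add: sum_distrib_left ac_simps)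
      finally show ?thesis using c0 by simp
    qed
    have gh: "(\<Sum>y\<in>UNIV. g y * h y) = 0"
    proof -
      have "0 = (\<Sum>y\<in>UNIV. g y * M y j)" using gM by simp
      also have "\<dots> = c * (\<Sum>y\<in>UNIV. g y * h y)" unfolding colj by (simp add: sum_distrib_left ac_simps)
      finally show ?thesis using c0 by simp
    qed
    note F = ij gj hi gh rowi colj gM Mh
    define P where "P = Pm i j g h"
    define Q where "Q = Qm i j g h"
    define N1' where "N1' = N1 i j g h M"
    have PQ1: "mmul P Q = idm" unfolding P_def Q_def by (rule PQ[OF ij gj hi gh])
    have QP1: "mmul Q P = idm" unfolding P_def Q_def by (rule QP[OF ij gj hi gh])
    have N1eq: "N1' = mmul (mmul P M) Q" unfolding N1'_def P_def Q_def by (rule N1_def[OF F])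
    have N1i: "N1' i w = c * idm j w" for w unfolding N1'_def by (rule N1_i[OF F])
    have N1j: "N1' j w = 0" for w unfolding N1'_def by (rule N1_j[OF F])
    have N1ci: "N1' x i = 0" for x unfolding N1'_def by (rule N1_ci[OF F])
    have N1cj: "x \<noteq> i \<Longrightarrow> N1' x j = 0" for x unfolding N1'_def by (rule N1_cj[OF F])
    have fixP: "fixU U P" unfolding fixU_def P_def Pm_def using iU jU gU hU by (auto simp: idm_def)
    have fixQ: "fixU U Q" unfolding fixU_def Q_def Qm_def using iU jU gU hU by (auto simp: idm_def)
    have suppN1: "supp U N1'" unfolding N1eq by (rule supp_conj[OF fixP fixQ less.prems(2)])
    define E where "E = (\<lambda>x y. if x = i \<and> y = j then c else (0::bit fps))"
    define M2 where "M2 = (\<lambda>x y. if x \<in> {i, j} \<or> y \<in> {i, j} then 0 else N1' x y)"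
    have split: "N1' = (\<lambda>x y. M2 x y + E x y)"
    proof (intro ext)
      fix x y
      show "N1' x y = M2 x y + E x y"
        using ij N1i N1j N1ci N1cj unfolding M2_def E_def
        by (cases "x = i"; cases "x = j"; cases "y = i"; cases "y = j") (auto simp: idm_def)
    qed
    have N1N1: "mmul N1' N1' = (\<lambda>_ _. 0)"
    proof -
      have "mmul N1' N1' = mmul P (mmul M (mmul Q (mmul P (mmul M Q))))" unfolding N1eq by (simp only: mmul_assoc)
      also have "\<dots> = mmul P (mmul M (mmul M Q))" by (simp only: inv_cancel[OF QP1])
      also have "\<dots> = mmul P (mmul (mmul M M) Q)" by (simp only: mmul_assoc)
      finally show ?thesis using less.prems(3) by simp
    qed
    have M2M2: "mmul M2 M2 = (\<lambda>_ _. 0)"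
    proof (intro ext)
      fix x z
      show "mmul M2 M2 x z = 0"
      proof (cases "x \<in> {i, j} \<or> z \<in> {i, j}")
        case True
        then show ?thesis unfolding mmul_def M2_def by auto
      next
        case False
        have a: "M2 x y = N1' x y" for y using False N1ci N1cj unfolding M2_def by auto
        have b: "M2 y z = N1' y z" for y using False N1i N1j ij unfolding M2_def by (auto simp: idm_def)
        have "mmul M2 M2 x z = mmul N1' N1' x z" unfolding mmul_def a b ..
        then show ?thesis using N1N1 by simp
      qed
    qed
    have suppM2: "supp (U - {i, j}) M2"
      using suppN1 unfolding supp_def M2_def by auto
    have fU: "finite U" by simp
    have cardU: "card (U - {i, j}) < m"
    proof -
      have "card (U - {i, j}) = card U - card {i, j}" using iU jU by (intro card_Diff_subset) auto
      moreover have "card {i, j} = 2" using ij by simp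
      moreover have "card {i, j} \<le> card U" using iU jU fU by (intro card_mono) auto
      ultimately show ?thesis using less.prems(1) by simp
    qed
    obtain P2 Q2 N2 where P2Q2: "mmul P2 Q2 = idm" and Q2P2: "mmul Q2 P2 = idm"
      and comm2: "mmul P2 M2 = mmul N2 P2" and nf2: "NF N2" and supp2: "supp (U - {i, j}) N2"
      and fixP2: "fixU (U - {i, j}) P2" and fixQ2: "fixU (U - {i, j}) Q2"
      using less.IH[OF cardU refl suppM2 M2M2] by blast
    have P2E: "mmul P2 E = E"
    proof (intro ext)
      fix x z
      have "mmul P2 E x z = P2 x i * E i z" unfolding mmul_def by (rule sum_single) (simp add: E_def)
      also have "\<dots> = E x z" using fixP2 unfolding fixU_def E_def by (auto simp: idm_def)
      finally show "mmul P2 E x z = E x z" .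
    qed
    have EP2: "mmul E P2 = E"
    proof (intro ext)
      fix x z
      have "mmul E P2 x z = E x j * P2 j z" unfolding mmul_def by (rule sum_single) (simp add: E_def)
      also have "\<dots> = E x z" using fixP2 unfolding fixU_def E_def by (auto simp: idm_def)
      finally show "mmul E P2 x z = E x z" .
    qed
    define N' where "N' = (\<lambda>x y. N2 x y + E x y)"
    have PMeq: "mmul P M = mmul N1' P" unfolding N1eq by (simp add: mmul_assoc QP1)
    have comm': "mmul (mmul P2 P) M = mmul N' (mmul P2 P)"
    proof -
      have "mmul (mmul P2 P) M = mmul (mmul P2 N1') P" by (simp add: mmul_assoc PMeq)
      also have "mmul P2 N1' = mmul N' P2"
        unfolding split mmul_add_right comm2 P2E N'_def mmul_add_left EP2 ..
      finally show ?thesis by (simp add: mmul_assoc)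
    qed
    have nf': "NF N'"
    proof -
      have s2: "N2 x y \<noteq> 0 \<Longrightarrow> x \<in> U - {i, j} \<and> y \<in> U - {i, j}" for x y using supp2 unfolding supp_def by blast
      have N'_i: "N' i y = E i y" for y unfolding N'_def using s2[of i y] by auto
      have N'_o: "x \<noteq> i \<Longrightarrow> N' x y = N2 x y" for x y unfolding N'_def E_def by auto
      have N'_cj: "N' x j = E x j" for x unfolding N'_def using s2[of x j] by auto
      have N'_co: "y \<noteq> j \<Longrightarrow> N' x y = N2 x y" for x y unfolding N'_def E_def by auto
      show ?thesis unfolding NF_def
      proof (intro conjI allI impI)
        fix x y y' assume a: "N' x y \<noteq> 0" "N' x y' \<noteq> 0"
        show "y = y'"
        proof (cases "x = i")
          case True then show ?thesis using a N'_i unfolding E_def by (auto split: if_splits)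
        next
          case False then show ?thesis using a N'_o nf_row[OF nf2] by metis
        qed
      next
        fix x x' y assume a: "N' x y \<noteq> 0" "N' x' y \<noteq> 0"
        show "x = x'"
        proof (cases "y = j")
          case True then show ?thesis using a N'_cj unfolding E_def by (auto split: if_splits)
        next
          case False then show ?thesis using a N'_co nf_col[OF nf2] by metis
        qed
      next
        fix x y z assume a: "N' x y \<noteq> 0"
        show "N' y z = 0"
        proof (cases "x = i \<and> y = j")
          case True
          then show ?thesis using N'_o[of j z] ij s2[of j z] by auto
        next
          case False
          then have "N2 x y \<noteq> 0" using a unfolding N'_def E_def by auto
          then have "y \<noteq> i" "N2 y z = 0" using s2[of x y] nf_sq[OF nf2] by auto
          then show ?thesis using N'_o by simp
        qed
      qed
    qed
    have supp': "supp U N'"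
      using supp2 iU jU unfolding supp_def N'_def E_def by auto
    have fix1: "fixU U (mmul P2 P)" by (rule fixU_mmul[OF fixU_mono[OF _ fixP2] fixP]) auto
    have fix2: "fixU U (mmul Q Q2)" by (rule fixU_mmul[OF fixQ fixU_mono[OF _ fixQ2]]) auto
    have "mmul (mmul P2 P) (mmul Q Q2) = idm" by (simp add: mmul_assoc inv_cancel[OF PQ1] P2Q2)
    moreover have "mmul (mmul Q Q2) (mmul P2 P) = idm" by (simp add: mmul_assoc inv_cancel[OF Q2P2] QP1)
    ultimately show ?thesis using comm' nf' supp' fix1 fix2 by blast
  qed
qed

lemma nf_exists:
  fixes M :: "'c::finite \<Rightarrow> 'c \<Rightarrow> bit fps"
  assumes "mmul M M = (\<lambda>_ _. 0)"
  shows "\<exists>P Q N. mmul P Q = idm \<and> mmul Q P = idm \<and> mmul P M = mmul N P \<and> NF N"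
  using nf_aux[OF refl _ assms, of UNIV] unfolding supp_def by blast




definition red :: "('c \<Rightarrow> 'c \<Rightarrow> bit fps) \<Rightarrow> 'c \<Rightarrow> 'c \<Rightarrow> bit" where
  "red X = (\<lambda>x y. X x y $ 0)"

lemma red_mmul: "red (mmul X Y) = mmul (red X) (red (Y :: 'c::finite \<Rightarrow> 'c \<Rightarrow> bit fps))"
  unfolding red_def mmul_def by (auto intro!: ext simp: fps_sum_nth)

lemma red_idm: "red idm = idm"
  unfolding red_def idm_def by (auto intro!: ext)

lemma card_arith:
  fixes N :: "'c::finite \<Rightarrow> 'c \<Rightarrow> bit fps"
  assumes nf: "NF N"
  shows "card (frees (red N)) = card (frees N) + 2 * card (TT N)"
proof -
  let ?N0 = "red N"
  have nz: "f $ 0 \<noteq> 0 \<Longrightarrow> f \<noteq> 0" for f :: "bit fps" by auto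
  have s0: "srcs ?N0 \<subseteq> srcs N" unfolding srcs_def red_def using nz by blast
  have t0: "tgts ?N0 \<subseteq> tgts N" unfolding tgts_def red_def using nz by blast
  define TP where "TP = {p. N (fst p) (snd p) \<noteq> 0 \<and> N (fst p) (snd p) $ 0 = 0}"
  have TS: "srcs N - srcs ?N0 = fst ` TP"
  proof (intro set_eqI iffI)
    fix x assume x: "x \<in> srcs N - srcs ?N0"
    then obtain y where y: "N x y \<noteq> 0" unfolding srcs_def by blast
    have "N x y $ 0 = 0" using x unfolding srcs_def red_def by auto
    then have "(x, y) \<in> TP" using y unfolding TP_def by simp
    then show "x \<in> fst ` TP" by (rule image_eqI[rotated]) simp
  next
    fix x assume "x \<in> fst ` TP"
    then obtain y where y: "N x y \<noteq> 0" "N x y $ 0 = 0" unfolding TP_def by auto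
    have "N x y' $ 0 = 0" for y'
    proof (cases "N x y' = 0")
      case False then have "y' = y" using nf_row[OF nf y(1)] by blast
      then show ?thesis using y by simp
    qed simp
    then show "x \<in> srcs N - srcs ?N0" using y unfolding srcs_def red_def by auto
  qed
  have TT: "tgts N - tgts ?N0 = snd ` TP" "TT N = snd ` TP"
  proof -
    show "TT N = snd ` TP" unfolding TT_def TP_def by (auto simp: image_iff)
    show "tgts N - tgts ?N0 = snd ` TP"
    proof (intro set_eqI iffI)
      fix y assume y: "y \<in> tgts N - tgts ?N0"
      then obtain x where x: "N x y \<noteq> 0" unfolding tgts_def by blast
      have "N x y $ 0 = 0" using y unfolding tgts_def red_def by auto
      then have "(x, y) \<in> TP" using x unfolding TP_def by simp
      then show "y \<in> snd ` TP" by (rule image_eqI[rotated]) simp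
    next
      fix y assume "y \<in> snd ` TP"
      then obtain x where x: "N x y \<noteq> 0" "N x y $ 0 = 0" unfolding TP_def by auto
      have "N x' y $ 0 = 0" for x'
      proof (cases "N x' y = 0")
        case False then have "x' = x" using nf_col[OF nf x(1)] by blast
        then show ?thesis using x by simp
      qed simp
      then show "y \<in> tgts N - tgts ?N0" using x unfolding tgts_def red_def by auto
    qed
  qed
  have injf: "inj_on fst TP"
    unfolding TP_def by (rule inj_onI) (auto dest: nf_row[OF nf] simp: prod_eq_iff)
  have injs: "inj_on snd TP"
    unfolding TP_def by (rule inj_onI) (auto dest: nf_col[OF nf] simp: prod_eq_iff)
  have cTS: "card (srcs N - srcs ?N0) = card (TT N)"
    unfolding TS TT(2) using card_image[OF injf] card_image[OF injs] by simp
  have cTT: "card (tgts N - tgts ?N0) = card (TT N)" unfolding TT by simp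
  have st: "srcs N \<inter> tgts N = {}" using nf_src_tgt[OF nf] by blast
  have eq: "frees ?N0 = frees N \<union> (srcs N - srcs ?N0) \<union> (tgts N - tgts ?N0)"
    unfolding frees_def using s0 t0 st by blast
  have "card (frees ?N0) = card (frees N \<union> (srcs N - srcs ?N0)) + card (tgts N - tgts ?N0)"
    unfolding eq by (rule card_Un_disjoint) (use st in \<open>auto simp: frees_def\<close>)
  also have "card (frees N \<union> (srcs N - srcs ?N0)) = card (frees N) + card (srcs N - srcs ?N0)"
    by (rule card_Un_disjoint) (auto simp: frees_def)
  finally show ?thesis using cTS cTT by simp
qed

lemma NF_red:
  fixes N :: "'c::finite \<Rightarrow> 'c \<Rightarrow> bit fps"
  shows "NF N \<Longrightarrow> NF (red N)"
proof -
  assume nf: "NF N"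
  have a: "red N x y \<noteq> 0 \<Longrightarrow> N x y \<noteq> 0" for x y unfolding red_def by auto
  show ?thesis unfolding NF_def
  proof (intro conjI allI impI)
    fix x y y' assume "red N x y \<noteq> 0" "red N x y' \<noteq> 0"
    then show "y = y'" using nf_row[OF nf] a by blast
  next
    fix x x' y assume "red N x y \<noteq> 0" "red N x' y \<noteq> 0"
    then show "x = x'" using nf_col[OF nf] a by blast
  next
    fix x y z assume "red N x y \<noteq> 0"
    then have "N y z = 0" using nf_sq[OF nf] a by blast
    then show "red N y z = 0" unfolding red_def by simp
  qed
qed

theorem lemma2p10:
  fixes A :: "'c::finite \<Rightarrow> 'c \<Rightarrow> bit" and \<iota> :: "'c \<Rightarrow> 'c" and ind :: "'c \<Rightarrow> nat"
  assumes invol: "\<And>x. \<iota> (\<iota> x) = x"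
    and ind_inv: "\<And>x. ind (\<iota> x) = ind x"
    and deg: "\<And>x y. A x y \<noteq> 0 \<Longrightarrow> ind y = ind x + 1"
    and dd: "\<And>x z. (\<Sum>y\<in>UNIV. A x y * A y z) = 0"
    and equiv: "\<And>x y. A (\<iota> x) (\<iota> y) = A x y"
  shows "r_free A \<iota> + 2 * r_tor A \<iota> = dim_morse_cohomology A"
proof -
  let ?D = "Dm A \<iota>"
  have MM: "mmul ?D ?D = (\<lambda>_ _. 0)" by (rule Dm_sq[OF invol dd equiv])
  obtain P Q N where PQ: "mmul P Q = idm" and QP: "mmul Q P = idm" and comm: "mmul P ?D = mmul N P"
    and nf: "NF N" using nf_exists[OF MM] by blast
  have KL: "mat_apply Q (mat_apply P w) = w" for w by (simp add: mat_apply_mmul PQ)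
  have LK: "mat_apply P (mat_apply Q w) = w" for w by (simp add: mat_apply_mmul QP)
  have bc: "borel_cocycles A \<iota> = Zs ?D" unfolding borel_cocycles_def Zs_def borel_d_Dm ..
  have bb: "borel_coboundaries A \<iota> = Bs ?D" unfolding borel_coboundaries_def Bs_def borel_d_Dm ..
  have bt: "borel_torsion A \<iota> = Ts ?D" unfolding borel_torsion_def Ts_def bc bb ..
  note cs = conj_sets[OF PQ QP comm]
  have rf: "r_free A \<iota> = card (frees N)"
    unfolding r_free_def bc bt cs by (rule is_mg_min_gens[OF is_mg_image[OF KL LK mg_free[OF nf]]])
  have rt: "r_tor A \<iota> = card (TT N)"
    unfolding r_tor_def bb bt cs by (rule is_mg_min_gens[OF is_mg_image[OF KL LK mg_tor[OF nf]]])
  have rD: "red ?D = A" unfolding red_def by (auto intro!: ext)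
  have PQ0: "mmul (red P) (red Q) = idm" using arg_cong[OF PQ, of red] by (simp add: red_mmul red_idm)
  have QP0: "mmul (red Q) (red P) = idm" using arg_cong[OF QP, of red] by (simp add: red_mmul red_idm)
  have comm0: "mmul (red P) A = mmul (red N) (red P)" using arg_cong[OF comm, of red] by (simp add: red_mmul rD)
  have KL0: "mat_apply (red Q) (mat_apply (red P) w) = w" for w by (simp add: mat_apply_mmul PQ0)
  have LK0: "mat_apply (red P) (mat_apply (red Q) w) = w" for w by (simp add: mat_apply_mmul QP0)
  note cs0 = conj_sets[OF PQ0 QP0 comm0]
  have mz: "{v. morse_d A v = (\<lambda>_. 0)} = Zs A" unfolding Zs_def morse_d_def ..
  have mb: "range (morse_d A) = Bs A" unfolding Bs_def morse_d_def ..
  have dm: "dim_morse_cohomology A = card (frees (red N))"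
    unfolding dim_morse_cohomology_def mz mb cs0
    by (rule is_mg_min_gens[OF is_mg_image[OF KL0 LK0 mg_bit[OF NF_red[OF nf]]]])
  show ?thesis unfolding rf rt dm card_arith[OF nf] ..
qed


end
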